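(* Let $R$ be a tournament on $[n]=\{1,\dots,n\}$. Then there exist independent, proper, continuous random variables $X_1,\dots,X_n$ on the unit interval such that for all $i,j\in[n]$, $$P(X_i>X_j)>\tfrac12 \iff (i,j)\in R .$$
   Context: A tournament on a set $I$ is a subset $R\subset I\times I$ containing no pair $(i,i)$ such that for every pair of distinct $i,j\in I$ exactly one of $(i,j),(j,i)$ lies in $R$. A continuous random variable on the unit interval is a random variable $X$ whose distribution function $F$ is continuous and strictly increasing on $[0,1]$ with $F(0)=0$ and $F(1)=1$. Such an $X$ is proper if $E(X)=\tfrac12$. *)

theory Defs
  imports "HOL-Probability.Probability"
begin

definition tournament :: "'a set \<Rightarrow> ('a \<times> 'a) set \<Rightarrow> bool" where
  "tournament I R \<longleftrightarrow> R \<subseteq> I \<times> I \<and> (\<forall>i. (i, i) \<notin> R) \<and>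
     (\<forall>i\<in>I. \<forall>j\<in>I. i \<noteq> j \<longrightarrow> ((i, j) \<in> R \<longleftrightarrow> (j, i) \<notin> R))"

definition distr_fun :: "'a measure \<Rightarrow> ('a \<Rightarrow> real) \<Rightarrow> real \<Rightarrow> real" where
  "distr_fun M X x = measure M {\<omega> \<in> space M. X \<omega> \<le> x}"

definition cont_rv_unit :: "'a measure \<Rightarrow> ('a \<Rightarrow> real) \<Rightarrow> bool" where
  "cont_rv_unit M X \<longleftrightarrow> X \<in> borel_measurable M \<and>
     continuous_on {0..1} (distr_fun M X) \<and> strict_mono_on {0..1} (distr_fun M X) \<and>
     distr_fun M X 0 = 0 \<and> distr_fun M X 1 = 1"

definition proper_rv :: "'a measure \<Rightarrow> ('a \<Rightarrow> real) \<Rightarrow> bool" where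
  "proper_rv M X \<longleftrightarrow> integral\<^sup>L M X = 1 / 2"

end

theory Submission
  imports Defs
begin


definition ramp :: "real \<Rightarrow> real \<Rightarrow> real \<Rightarrow> real" where
  "ramp a b u = max 0 (min 1 ((u - a) * inverse (b - a)))"

lemma ramp_cont: "continuous_on S (ramp a b)"
  unfolding ramp_def by (intro continuous_intros)

lemma ramp_ge0: "0 \<le> ramp a b u" and ramp_le1: "ramp a b u \<le> 1"
  unfolding ramp_def by auto

lemma ramp_0: "u \<le> a \<Longrightarrow> a < b \<Longrightarrow> ramp a b u = 0"
proof -
  assume "u \<le> a" "a < b"
  then have "(u - a) * inverse (b - a) \<le> 0" by (intro mult_nonpos_nonneg) auto
  then show ?thesis unfolding ramp_def by (auto simp: max_def min_def)
qed

lemma ramp_1: "b \<le> u \<Longrightarrow> a < b \<Longrightarrow> ramp a b u = 1"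
  unfolding ramp_def by (auto simp: max_def min_def field_simps)

lemma ramp_mid: "a \<le> u \<Longrightarrow> u \<le> b \<Longrightarrow> a < b \<Longrightarrow> ramp a b u = (u - a) / (b - a)"
  unfolding ramp_def by (auto simp: max_def min_def field_simps)

lemma ramp_mono: "a < b \<Longrightarrow> u \<le> v \<Longrightarrow> ramp a b u \<le> ramp a b v"
proof -
  assume "a < b" "u \<le> v"
  then have "(u - a) * inverse (b - a) \<le> (v - a) * inverse (b - a)" by (intro mult_right_mono) auto
  then show ?thesis unfolding ramp_def by (auto simp: max_def min_def)
qed

lemma ramp_integral:
  assumes "0 \<le> a" "a < b" "b \<le> 1"
  shows "integral {0..1} (ramp a b) = 1 - (a + b) / 2"
proof -
  have int: "ramp a b integrable_on {x..y}" for x y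
    by (intro integrable_continuous_interval ramp_cont)
  have i1: "integral {0..a} (ramp a b) = 0"
    using integral_cong[of "{0..a}" "ramp a b" "\<lambda>_. 0"] assms by (simp add: ramp_0)
  have i3: "integral {b..1} (ramp a b) = 1 - b"
    using integral_cong[of "{b..1}" "ramp a b" "\<lambda>_. 1"] assms by (simp add: ramp_1)
  have "((\<lambda>u. (u - a) / (b - a)) has_integral ((b-a)^2/(2*(b-a)) - (a-a)^2/(2*(b-a)))) {a..b}"
    apply (rule fundamental_theorem_of_calculus)
    using assms apply simp
    using assms apply (auto intro!: derivative_eq_intros simp: has_real_derivative_iff_has_vector_derivative[symmetric])
    apply (auto simp add: field_simps)
    done
  moreover have "(b-a)^2/(2*(b-a)) - (a-a)^2/(2*(b-a)) = (b - a)/2"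
    using assms by (simp add: power2_eq_square field_simps)
  ultimately have "((\<lambda>u. (u - a) / (b - a)) has_integral (b - a)/2) {a..b}"
    by metis
  then have "integral {a..b} (\<lambda>u. (u - a) / (b - a)) = (b - a) / 2"
    by (rule integral_unique)
  moreover have "integral {a..b} (ramp a b) = integral {a..b} (\<lambda>u. (u - a) / (b - a))"
    by (rule integral_cong) (use assms in \<open>simp add: ramp_mid\<close>)
  ultimately have i2: "integral {a..b} (ramp a b) = (b - a) / 2" by simp
  have "integral {0..1} (ramp a b) = integral {0..b} (ramp a b) + integral {b..1} (ramp a b)"
    using assms int by (intro Henstock_Kurzweil_Integration.integral_combine[symmetric]) auto
  also have "integral {0..b} (ramp a b) = integral {0..a} (ramp a b) + integral {a..b} (ramp a b)"
    using assms int by (intro Henstock_Kurzweil_Integration.integral_combine[symmetric]) auto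
  finally show ?thesis using i1 i2 i3 by (simp add: field_simps)
qed

lemma sum_real_lessThan: "(\<Sum>r<T. real r) = real T * (real T - 1) / 2"
  by (induction T) (auto simp: field_simps)

definition gf :: "nat \<Rightarrow> real \<Rightarrow> real \<Rightarrow> (nat \<Rightarrow> real) \<Rightarrow> real \<Rightarrow> real" where
  "gf T e th t u = e * u + (1 - e) / real T *
     (\<Sum>r<T. t r * ramp (real r / T) ((real r + th) / T) u
              + (1 - t r) * ramp ((real r + 1 - th) / T) ((real r + 1) / T) u)"

definition U :: "real measure" where "U = restrict_space lborel {0..1}"

lemma space_U: "space U = {0..1}"
  unfolding U_def by simp

lemma sets_U: "A \<in> sets U \<longleftrightarrow> A \<subseteq> {0..1} \<and> A \<in> sets borel"
  unfolding U_def by (subst sets_restrict_space_iff) auto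

lemma measure_U: "A \<subseteq> {0..1} \<Longrightarrow> measure U A = measure lborel A"
  unfolding U_def by (rule measure_restrict_space) auto

lemma prob_U: "prob_space U"
  unfolding U_def by (rule prob_space_restrict_space) auto

lemma meas_U: "f \<in> borel_measurable borel \<Longrightarrow> f \<in> borel_measurable U"
  unfolding U_def by (rule measurable_restrict_space1) simp

lemma integral_U: "continuous_on {0..1} f \<Longrightarrow> integral\<^sup>L U f = integral {0..1} (f :: real \<Rightarrow> real)"
proof -
  assume c: "continuous_on {0..1} f"
  have "integral\<^sup>L U f = integral\<^sup>L lborel (\<lambda>x. indicator {0..1} x *\<^sub>R f x)"
    unfolding U_def by (rule integral_restrict_space) simp
  also have "\<dots> = integral {0..1} f"
    using set_borel_integral_eq_integral(2)[OF borel_integrable_atLeastAtMost'[OF c]]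
    by (simp add: set_lebesgue_integral_def)
  finally show ?thesis .
qed

locale gsetup =
  fixes T :: nat and e th :: real and t :: "nat \<Rightarrow> real"
  assumes T: "T \<ge> 1" and e: "0 < e" "e < 1" and th: "0 < th" "th < 1/2"
    and t: "\<And>r. 0 \<le> t r" "\<And>r. t r \<le> 1"
begin

abbreviation "g \<equiv> gf T e th t"

lemma Tpos: "real T > 0" using T by simp

lemma a1: "real r / T < (real r + th) / T"
  using Tpos th by (intro divide_strict_right_mono) auto
lemma a2: "(real r + 1 - th) / T < (real r + 1) / T"
  using Tpos th by (intro divide_strict_right_mono) auto

lemma g_cont: "continuous_on S g"
  unfolding gf_def by (intro continuous_intros ramp_cont)

lemma g_strict: assumes "u < v" shows "g u < g v"
proof -
  have "(\<Sum>r<T. t r * ramp (real r / T) ((real r + th) / T) u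
              + (1 - t r) * ramp ((real r + 1 - th) / T) ((real r + 1) / T) u)
      \<le> (\<Sum>r<T. t r * ramp (real r / T) ((real r + th) / T) v
              + (1 - t r) * ramp ((real r + 1 - th) / T) ((real r + 1) / T) v)"
    using assms t a1 a2
    by (intro sum_mono add_mono mult_left_mono ramp_mono) (auto simp: less_imp_le)
  moreover have "e * u < e * v" using e assms by simp
  moreover have "0 \<le> (1 - e) / real T" using e Tpos by simp
  ultimately show ?thesis unfolding gf_def
    by (smt (verit, best) mult_left_mono)
qed

lemma g0: "g 0 = 0"
proof -
  have "ramp (real r / T) ((real r + th) / T) 0 = 0" for r
    using a1 Tpos by (intro ramp_0) auto
  moreover have "ramp ((real r + 1 - th) / T) ((real r + 1) / T) 0 = 0" for r
    using a2 Tpos th by (intro ramp_0) auto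
  ultimately show ?thesis unfolding gf_def by simp
qed

lemma g1: "g 1 = 1"
proof -
  have "ramp (real r / T) ((real r + th) / T) 1 = 1" if "r < T" for r
    using a1 Tpos th that by (intro ramp_1) (auto simp: field_simps)
  moreover have "ramp ((real r + 1 - th) / T) ((real r + 1) / T) 1 = 1" if "r < T" for r
    using a2 Tpos that by (intro ramp_1) (auto simp: field_simps)
  ultimately have "g 1 = e + (1 - e) / real T * (\<Sum>r<T. 1)"
    unfolding gf_def by (intro arg_cong2[where f="(+)"] arg_cong2[where f="(*)"] refl sum.cong) auto
  then show ?thesis using Tpos by simp
qed

abbreviation "trm r u \<equiv> t r * ramp (real r / T) ((real r + th) / T) u
              + (1 - t r) * ramp ((real r + 1 - th) / T) ((real r + 1) / T) u"

lemma g_eq: "g u = e * u + (1 - e) / real T * (\<Sum>r<T. trm r u)"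
  unfolding gf_def ..

lemma trm_ge0: "0 \<le> trm r u"
  using t[of r] by (intro add_nonneg_nonneg mult_nonneg_nonneg ramp_ge0) auto

lemma trm_le1: "trm r u \<le> 1"
proof -
  have "trm r u \<le> t r * 1 + (1 - t r) * 1"
    using t[of r] by (intro add_mono mult_left_mono ramp_le1) auto
  then show ?thesis by simp
qed

lemma sum_h1: "r \<le> T \<Longrightarrow> (\<Sum>s<T. if s < r then (1::real) else 0) = real r"
proof -
  assume "r \<le> T"
  then have "{..<T} \<inter> {s. s < r} = {..<r}" by auto
  then show ?thesis by (simp add: sum.If_cases)
qed

lemma gL:
  assumes "r < T" "(real r + th) / T \<le> u"
  shows "e * u + (1 - e) / real T * (real r + t r) \<le> g u"
proof -
  have "(\<Sum>s<T. (if s < r then 1 else 0) + (if s = r then t r else 0)) \<le> (\<Sum>s<T. trm s u)"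
  proof (rule sum_mono)
    fix s assume s: "s \<in> {..<T}"
    show "(if s < r then 1 else 0) + (if s = r then t r else 0) \<le> trm s u"
    proof (cases "s < r")
      case True
      then have "real s + 1 \<le> real r" by simp
      then have "(real s + 1) / T \<le> (real r + th) / T" "(real s + th) / T \<le> (real r + th) / T"
        using th Tpos by (auto intro!: divide_right_mono)
      then have "ramp (real s / T) ((real s + th) / T) u = 1" "ramp ((real s + 1 - th) / T) ((real s + 1) / T) u = 1"
        using assms a1 a2 by (auto intro!: ramp_1)
      then show ?thesis using True by simp
    next
      case False
      show ?thesis
      proof (cases "s = r")
        case True
        then have "ramp (real s / T) ((real s + th) / T) u = 1"
          using assms a1 by (auto intro!: ramp_1)
        moreover have "0 \<le> (1 - t r) * ramp ((real s + 1 - th) / T) ((real s + 1) / T) u"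
          using t[of r] by (intro mult_nonneg_nonneg ramp_ge0) auto
        ultimately show ?thesis using True by simp
      next
        case False
        then show ?thesis using \<open>\<not> s < r\<close> trm_ge0[of s u] by simp
      qed
    qed
  qed
  also have "(\<Sum>s<T. (if s < r then 1 else 0) + (if s = r then t r else 0)) = real r + t r"
    using assms sum_h1[of r] by (simp add: sum.distrib)
  finally have "real r + t r \<le> (\<Sum>s<T. trm s u)" .
  then show ?thesis unfolding g_eq using e Tpos
    by (intro add_left_mono mult_left_mono) auto
qed

lemma gU:
  assumes "r < T" "v \<le> (real r + 1 - th) / T"
  shows "g v \<le> e * v + (1 - e) / real T * (real r + t r)"
proof -
  have "(\<Sum>s<T. trm s v) \<le> (\<Sum>s<T. (if s < r then 1 else 0) + (if s = r then t r else 0))"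
  proof (rule sum_mono)
    fix s assume s: "s \<in> {..<T}"
    show "trm s v \<le> (if s < r then 1 else 0) + (if s = r then t r else 0)"
    proof (cases "s < r")
      case True
      then show ?thesis using trm_le1[of s v] by simp
    next
      case False
      show ?thesis
      proof (cases "s = r")
        case True
        then have "ramp ((real s + 1 - th) / T) ((real s + 1) / T) v = 0"
          using assms a2 by (auto intro!: ramp_0)
        moreover have "t r * ramp (real s / T) ((real s + th) / T) v \<le> t r * 1"
          using t[of r] by (intro mult_left_mono ramp_le1) auto
        ultimately show ?thesis using True by simp
      next
        case False
        then have "real r + 1 \<le> real s" using \<open>\<not> s < r\<close> by simp
        then have "(real r + 1 - th) / T \<le> real s / T" "(real r + 1 - th) / T \<le> (real s + 1 - th) / T"
          using th Tpos by (auto intro!: divide_right_mono)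
        then have "ramp (real s / T) ((real s + th) / T) v = 0" "ramp ((real s + 1 - th) / T) ((real s + 1) / T) v = 0"
          using assms a1 a2 by (auto intro!: ramp_0)
        then show ?thesis using False \<open>\<not> s < r\<close> by simp
      qed
    qed
  qed
  also have "(\<Sum>s<T. (if s < r then 1 else 0) + (if s = r then t r else 0)) = real r + t r"
    using assms sum_h1[of r] by (simp add: sum.distrib)
  finally have "(\<Sum>s<T. trm s v) \<le> real r + t r" .
  then show ?thesis unfolding g_eq using e Tpos
    by (intro add_left_mono mult_left_mono) auto
qed

lemma gU':
  assumes "r \<le> T" "v \<le> real r / T"
  shows "g v \<le> e * v + (1 - e) / real T * real r"
proof -
  have "(\<Sum>s<T. trm s v) \<le> (\<Sum>s<T. (if s < r then 1 else 0))"
  proof (rule sum_mono)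
    fix s assume s: "s \<in> {..<T}"
    show "trm s v \<le> (if s < r then 1 else 0)"
    proof (cases "s < r")
      case True
      then show ?thesis using trm_le1[of s v] by simp
    next
      case False
      then have "real r \<le> real s" by simp
      then have "real r / T \<le> real s / T" "real r / T \<le> (real s + 1 - th) / T"
        using th Tpos by (auto intro!: divide_right_mono)
      then have "ramp (real s / T) ((real s + th) / T) v = 0" "ramp ((real s + 1 - th) / T) ((real s + 1) / T) v = 0"
        using assms a1 a2 by (auto intro!: ramp_0)
      then show ?thesis using False by simp
    qed
  qed
  also have "(\<Sum>s<T. (if s < r then 1 else 0)) = real r"
    using assms sum_h1[of r] by simp
  finally have "(\<Sum>s<T. trm s v) \<le> real r" .
  then show ?thesis unfolding g_eq using e Tpos
    by (intro add_left_mono mult_left_mono) auto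
qed

lemma g_integral:
  assumes sumt: "(\<Sum>r<T. t r) = real T / 2"
  shows "integral {0..1} g = 1 / 2"
proof -
  have rint: "\<And>a b. (ramp a b) integrable_on {0..1}"
    by (intro integrable_continuous_interval ramp_cont)
  have m1: "(\<lambda>x. c * ramp a b x) integrable_on {0..1}" for c a b
    by (intro integrable_continuous_interval continuous_intros ramp_cont)
  have tint: "(\<lambda>u. trm r u) integrable_on {0..1}" for r
    by (intro integrable_add m1)
  have i1: "integral {0..1} (ramp (real r / T) ((real r + th) / T)) = 1 - (real r + th / 2) / T" if "r < T" for r
  proof -
    have "(real r + th) / T \<le> 1" using that th Tpos by (simp add: field_simps)
    then have "integral {0..1} (ramp (real r / T) ((real r + th) / T)) = 1 - (real r / T + (real r + th) / T) / 2"
      using a1 Tpos by (intro ramp_integral) auto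
    moreover have "(real r / T + (real r + th) / T) / 2 = (real r + th / 2) / T"
      using Tpos by (simp add: field_simps)
    ultimately show ?thesis by simp
  qed
  have i2: "integral {0..1} (ramp ((real r + 1 - th) / T) ((real r + 1) / T)) = 1 - (real r + 1 - th / 2) / T" if "r < T" for r
  proof -
    have "(real r + 1) / T \<le> 1" "0 \<le> (real r + 1 - th) / T" using that th Tpos by (simp_all add: field_simps)
    then have "integral {0..1} (ramp ((real r + 1 - th) / T) ((real r + 1) / T)) = 1 - ((real r + 1 - th) / T + (real r + 1) / T) / 2"
      using a2 Tpos by (intro ramp_integral) auto
    moreover have "((real r + 1 - th) / T + (real r + 1) / T) / 2 = (real r + 1 - th / 2) / T"
      using Tpos by (simp add: field_simps)
    ultimately show ?thesis by simp
  qed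
  have it: "integral {0..1} (\<lambda>u. trm r u) = (1 - (real r + 1 - th / 2) / T) + t r * ((1 - th) / T)" if "r < T" for r
  proof -
    have "integral {0..1} (\<lambda>u. trm r u) = t r * integral {0..1} (ramp (real r / T) ((real r + th) / T))
        + (1 - t r) * integral {0..1} (ramp ((real r + 1 - th) / T) ((real r + 1) / T))"
      by (simp add: integral_add m1)
    also have "\<dots> = t r * (1 - (real r + th / 2) / T) + (1 - t r) * (1 - (real r + 1 - th / 2) / T)"
      using i1[OF that] i2[OF that] by simp
    also have "\<dots> = (1 - (real r + 1 - th / 2) / T) + t r * ((1 - th) / T)"
      using Tpos by (simp add: field_simps)
    finally show ?thesis .
  qed
  have iid: "integral {0..1} (\<lambda>u::real. u) = 1/2"
    by (simp add: integral_ident)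
  have Sint: "(\<lambda>u. \<Sum>r<T. trm r u) integrable_on {0..1}"
    by (rule integrable_sum) (auto intro: tint)
  have S: "integral {0..1} (\<lambda>u. \<Sum>r<T. trm r u) = (\<Sum>r<T. integral {0..1} (\<lambda>u. trm r u))"
    by (rule integral_sum) (auto intro: tint)
  have idint: "(\<lambda>u::real. e * u) integrable_on {0..1}"
    by (intro integrable_continuous_interval continuous_intros)
  have "integral {0..1} g = integral {0..1} (\<lambda>u. e * u) + integral {0..1} (\<lambda>u. (1 - e) / real T * (\<Sum>r<T. trm r u))"
    unfolding g_eq
    by (rule integral_add[OF idint]) (intro integrable_continuous_interval continuous_intros ramp_cont)
  also have "\<dots> = e * integral {0..1} (\<lambda>u::real. u) + (1 - e) / real T * (\<Sum>r<T. integral {0..1} (\<lambda>u. trm r u))"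
    using integral_mult_left[where S="{0..1}" and c=e and f="\<lambda>u. u"] integral_mult_left[where S="{0..1}" and c="(1-e)/real T" and f="\<lambda>u. \<Sum>r<T. trm r u"] S
    by simp
  also have "(\<Sum>r<T. integral {0..1} (\<lambda>u. trm r u)) = (\<Sum>r<T. (1 - (real r + 1 - th / 2) / T) + t r * ((1 - th) / T))"
    by (rule sum.cong) (auto simp: it)
  also have "\<dots> = (\<Sum>r<T. 1 - (real r + 1 - th / 2) / T) + (\<Sum>r<T. t r) * ((1 - th) / T)"
    by (simp only: sum.distrib sum_distrib_right)
  also have "(\<Sum>r<T. 1 - (real r + 1 - th / 2) / T) = real T - ((\<Sum>r<T. real r) + real T * (1 - th / 2)) / T"
    by (simp add: sum_subtractf sum_divide_distrib[symmetric] sum.distrib algebra_simps)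
  also have "real T - ((\<Sum>r<T. real r) + real T * (1 - th / 2)) / T + (\<Sum>r<T. t r) * ((1 - th) / T) = real T / 2"
    using Tpos unfolding sum_real_lessThan sumt by (simp add: field_simps)
  finally show ?thesis using iid Tpos by (simp add: field_simps)
qed

lemma g_le_iff: "g u \<le> g v \<longleftrightarrow> u \<le> v"
  using g_strict[of u v] g_strict[of v u] by (cases u v rule: linorder_cases) auto

lemma g_less_iff: "g u < g v \<longleftrightarrow> u < v"
  using g_le_iff[of v u] by auto

lemma g_range: "u \<in> {0..1} \<Longrightarrow> g u \<in> {0..1}"
  using g_le_iff[of 0 u] g_le_iff[of u 1] g0 g1 by auto

lemma g_surj: "x \<in> {0..1} \<Longrightarrow> \<exists>a\<in>{0..1}. g a = x"
  using IVT'[of g 0 x 1] g0 g1 g_cont by auto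

lemma g_image: "g ` {0..1} = {0..1}"
  using g_range g_surj by fastforce

lemma g_meas: "g \<in> borel_measurable borel"
  by (rule borel_measurable_continuous_onI) (rule g_cont)

lemma Fg: "a \<in> {0..1} \<Longrightarrow> measure U {u\<in>space U. g u \<le> g a} = a"
proof -
  assume a: "a \<in> {0..1}"
  then have "{u\<in>space U. g u \<le> g a} = {0..a}"
    by (auto simp: space_U g_le_iff)
  then show ?thesis using a by (simp add: measure_U)
qed

definition "Fd x = measure U {u\<in>space U. g u \<le> x}"

lemma Fd_g: "a \<in> {0..1} \<Longrightarrow> Fd (g a) = a"
  unfolding Fd_def by (rule Fg)

lemma Fd_cont: "continuous_on {0..1} Fd"
proof -
  have "continuous_on (g ` {0..1}) Fd"
    by (rule continuous_on_inv[OF g_cont]) (auto simp: Fd_g)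
  then show ?thesis by (simp add: g_image)
qed

lemma Fd_strict: "strict_mono_on {0..1} Fd"
proof (rule strict_mono_onI)
  fix x y :: real assume xy: "x \<in> {0..1}" "y \<in> {0..1}" "x < y"
  obtain a b where "a \<in> {0..1}" "b \<in> {0..1}" "g a = x" "g b = y"
    using g_surj xy by metis
  then show "Fd x < Fd y" using xy by (auto simp: Fd_g g_less_iff)
qed

lemma Fd0: "Fd 0 = 0" using Fd_g[of 0] g0 by simp
lemma Fd1: "Fd 1 = 1" using Fd_g[of 1] g1 by simp

lemma g_int_U: "(\<Sum>r<T. t r) = real T / 2 \<Longrightarrow> integral\<^sup>L U g = 1 / 2"
  using integral_U[OF g_cont] g_integral by simp

end


lemma final_ineq:
  fixes T :: nat and th :: real and W :: nat
  assumes T: "T \<ge> 1" and th: "0 < th" "th < 1/2"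
    and W: "real T + 1 \<le> 2 * real W"
    and thsmall: "real T ^ 2 < (1 - 2*th) * (real T ^ 2 + 1)"
  shows "1/2 < (1 - th) / T * ((real T * (real T - 1) / 2 + (1 - th) * real W) / T)"
proof -
  have Tp: "real T > 0" using T by simp
  have "(1 - 2*th) * (real T ^ 2 + 1) / 2 \<le> (1 - th) * (1 - th) * (real T * (real T - 1) / 2 + real W)"
  proof -
    have "(1 - 2*th) * (real T ^ 2 + 1) / 2 = (1 - 2*th) * (real T * (real T - 1) / 2 + (real T + 1) / 2)"
      by (simp add: power2_eq_square field_simps)
    also have "\<dots> \<le> (1 - th) * (1 - th) * (real T * (real T - 1) / 2 + (real T + 1) / 2)"
    proof (rule mult_right_mono)
      show "1 - 2 * th \<le> (1 - th) * (1 - th)" by (simp add: algebra_simps)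
      show "0 \<le> real T * (real T - 1) / 2 + (real T + 1) / 2" using T by simp
    qed
    also have "\<dots> \<le> (1 - th) * (1 - th) * (real T * (real T - 1) / 2 + real W)"
      using W th by (intro mult_left_mono add_left_mono) auto
    finally show ?thesis .
  qed
  also have "\<dots> \<le> (1 - th) * (real T * (real T - 1) / 2 + (1 - th) * real W)"
  proof -
    have "(1 - th) * (real T * (real T - 1) / 2) \<le> real T * (real T - 1) / 2"
      using T th by (intro mult_left_le_one_le) auto
    then have "(1 - th) * (real T * (real T - 1) / 2 + real W) \<le> real T * (real T - 1) / 2 + (1 - th) * real W"
      by (simp add: algebra_simps)
    then show ?thesis using th by (simp add: mult.assoc mult_left_mono)
  qed
  finally have *: "(1 - 2*th) * (real T ^ 2 + 1) / 2 \<le> (1 - th) * (real T * (real T - 1) / 2 + (1 - th) * real W)" .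
  have "(1 - th) / T * ((real T * (real T - 1) / 2 + (1 - th) * real W) / T)
      = (1 - th) * (real T * (real T - 1) / 2 + (1 - th) * real W) / (real T * real T)"
    by simp
  moreover have "1/2 < (1 - th) * (real T * (real T - 1) / 2 + (1 - th) * real W) / (real T * real T)"
    using * thsmall Tp by (simp add: field_simps power2_eq_square)
  ultimately show ?thesis by simp
qed





lemma lin_help1:
  fixes e Cc Ci Cj ev eu Cr :: real
  assumes "e < Cc" "Cc \<le> Ci - Cj" "ev \<le> e" "0 \<le> eu"
  shows "ev + (Cr + Cj) < eu + (Cr + Ci)"
  using assms by linarith

lemma lin_help2:
  fixes gv ev Cr eu Ci gu :: real
  assumes "gv \<le> ev + Cr" "ev < eu" "0 \<le> Ci" "eu + (Cr + Ci) \<le> gu"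
  shows "gv < gu"
  using assms by linarith

lemma lin_help3:
  fixes a b c d :: real
  assumes "b < c" "a \<le> b" "c \<le> d"
  shows "a < d"
  using assms by linarith

lemma pair_bound:
  fixes T :: nat and e th c :: real and ti tj :: "nat \<Rightarrow> real" and I :: "nat set" and i j :: nat
  assumes gi: "gsetup T e th ti" and gj: "gsetup T e th tj"
    and ij: "i \<in> I" "j \<in> I" "i \<noteq> j"
    and cbig: "e < (1 - e) / real T * c"
    and win: "real T + 1 \<le> 2 * real (card {r\<in>{..<T}. tj r + c \<le> ti r})"
    and thsmall: "real T ^ 2 < (1 - 2*th) * (real T ^ 2 + 1)"
  shows "1/2 < measure (PiM I (\<lambda>_. U)) {\<omega>\<in>space (PiM I (\<lambda>_. U)). gf T e th tj (\<omega> j) < gf T e th ti (\<omega> i)}"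
proof -
  interpret Gi: gsetup T e th ti by (rule gi)
  interpret Gj: gsetup T e th tj by (rule gj)
  interpret P: product_prob_space "\<lambda>_. U" I
    by (intro product_prob_spaceI prob_U)
  let ?M = "PiM I (\<lambda>_. U)"
  let ?C = "(1 - e) / real T"
  have Tp: "real T > 0" using Gi.Tpos .
  have th: "0 < th" "th < 1/2" using Gi.th by auto
  have e: "0 < e" "e < 1" using Gi.e by auto
  define w where "w r \<longleftrightarrow> tj r + c \<le> ti r" for r
  define Ir where "Ir r = {(real r + th) / T ..< (real r + 1) / T}" for r
  define er where "er r = (real r + (if w r then 1 - th else 0)) / T" for r
  define Jr where "Jr r = {0 ..< er r}" for r
  define E where "E r = {\<omega>\<in>space ?M. \<omega> i \<in> Ir r \<and> \<omega> j \<in> Jr r}" for r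
  have Ir_sub: "Ir r \<subseteq> {0..1}" if "r < T" for r
  proof -
    have "0 \<le> (real r + th) / T" using th Tp by simp
    moreover have "(real r + 1) / T \<le> 1" using that Tp by (simp add: field_simps)
    ultimately show ?thesis unfolding Ir_def by auto
  qed
  have er_le: "er r \<le> (real r + 1) / T" "0 \<le> er r" for r
    unfolding er_def using th Tp by (auto intro!: divide_right_mono)
  have Jr_sub: "Jr r \<subseteq> {0..1}" if "r < T" for r
  proof -
    have "(real r + 1) / T \<le> 1" using that Tp by (simp add: field_simps)
    then show ?thesis unfolding Jr_def using er_le[of r] by auto
  qed
  have mIr: "measure U (Ir r) = (1 - th) / T" if "r < T" for r
  proof -
    have "(real r + th) / T \<le> (real r + 1) / T" using th Tp by (intro divide_right_mono) auto
    then show ?thesis using Ir_sub[OF that] Tp by (simp add: measure_U Ir_def field_simps)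
  qed
  have mJr: "measure U (Jr r) = er r" if "r < T" for r
    using Jr_sub[OF that] er_le[of r] by (simp add: measure_U Jr_def)
  have E_sets: "E r \<in> sets ?M" if "r < T" for r
  proof -
    have "Ir r \<in> sets U" "Jr r \<in> sets U"
      using Ir_sub[OF that] Jr_sub[OF that] by (auto simp: sets_U Ir_def Jr_def)
    moreover have "{x\<in>space U. x \<in> Ir r} = Ir r" "{x\<in>space U. x \<in> Jr r} = Jr r"
      using Ir_sub[OF that] Jr_sub[OF that] by (auto simp: space_U)
    ultimately show ?thesis unfolding E_def using ij
      by (intro sets.sets_Collect_conj sets_Collect_single') auto
  qed
  have mE: "measure ?M (E r) = (1 - th) / T * er r" if "r < T" for r
  proof -
    have sets: "Ir r \<in> sets U" "Jr r \<in> sets U"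
      using Ir_sub[OF that] Jr_sub[OF that] by (auto simp: sets_U Ir_def Jr_def)
    have "E r = {x\<in>space ?M. \<forall>k\<in>{i,j}. x k \<in> (\<lambda>k. if k = i then Ir r else Jr r) k}"
      unfolding E_def using ij by auto
    then have "emeasure ?M (E r) = (\<Prod>k\<in>{i,j}. emeasure U ((\<lambda>k. if k = i then Ir r else Jr r) k))"
      using ij sets by (simp only:) (rule P.emeasure_PiM_Collect, auto)
    also have "\<dots> = emeasure U (Ir r) * emeasure U (Jr r)"
      using ij by simp
    also have "\<dots> = ennreal (measure U (Ir r) * measure U (Jr r))"
      using P.M.emeasure_eq_measure
      by (simp add: ennreal_mult'')
    finally show ?thesis using mIr[OF that] mJr[OF that] er_le[of r] th Tp
      by (simp add: P.emeasure_eq_measure)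
  qed
  have disj: "disjoint_family_on E {..<T}"
  proof (unfold disjoint_family_on_def, intro ballI impI)
    fix r s assume rs: "r \<in> {..<T}" "s \<in> {..<T}" "r \<noteq> s"
    have "Ir r \<inter> Ir s = {}"
    proof (cases "r < s")
      case True
      then have "real r + 1 \<le> real s + th" using th by simp
      then have "(real r + 1) / T \<le> (real s + th) / T" using Tp by (intro divide_right_mono) auto
      then show ?thesis unfolding Ir_def by auto
    next
      case False
      then have "real s + 1 \<le> real r + th" using th rs by simp
      then have "(real s + 1) / T \<le> (real r + th) / T" using Tp by (intro divide_right_mono) auto
      then show ?thesis unfolding Ir_def by auto
    qed
    then show "E r \<inter> E s = {}" unfolding E_def by auto
  qed
  have sub: "(\<Union>r\<in>{..<T}. E r) \<subseteq> {\<omega>\<in>space ?M. gf T e th tj (\<omega> j) < gf T e th ti (\<omega> i)}"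
  proof
    fix \<omega> assume "\<omega> \<in> (\<Union>r\<in>{..<T}. E r)"
    then obtain r where r: "r \<in> {..<T}" and om: "\<omega> \<in> E r" by auto
    then have sp: "\<omega> \<in> space ?M" and u: "\<omega> i \<in> Ir r" and v: "\<omega> j \<in> Jr r" unfolding E_def by auto
    let ?u = "\<omega> i" and ?v = "\<omega> j"
    have u1: "(real r + th) / T \<le> ?u" using u unfolding Ir_def by auto
    have u01: "?u \<in> {0..1}" using u Ir_sub[of r] r by auto
    have v01: "?v \<in> {0..1}" using v Jr_sub[of r] r by auto
    have L: "e * ?u + ?C * (real r + ti r) \<le> gf T e th ti ?u"
      using Gi.gL[of r ?u] r u1 by simp
    have "gf T e th tj ?v < gf T e th ti ?u"
    proof (cases "w r")
      case True
      then have "?v \<le> (real r + 1 - th) / T" using v unfolding Jr_def er_def by (auto simp: add_diff_eq)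
      then have Ub: "gf T e th tj ?v \<le> e * ?v + ?C * (real r + tj r)"
        using Gj.gU[of r ?v] r by simp
      have "?C * c \<le> ?C * (ti r - tj r)" using True unfolding w_def using e Tp
        by (intro mult_left_mono) auto
      moreover have "e * ?v \<le> e" using v01 e by (intro mult_left_le) auto
      moreover have "0 \<le> e * ?u" using u01 e by simp
      moreover have "?C * (ti r - tj r) = ?C * ti r - ?C * tj r" by (simp add: right_diff_distrib)
      moreover have "?C * (real r + ti r) = ?C * real r + ?C * ti r" "?C * (real r + tj r) = ?C * real r + ?C * tj r"
        by (simp_all add: distrib_left)
      ultimately have "e * ?v + ?C * (real r + tj r) < e * ?u + ?C * (real r + ti r)"
        using cbig lin_help1[of e "?C * c" "?C * ti r" "?C * tj r" "e * ?v" "e * ?u" "?C * real r"] by simp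
      then show ?thesis using Ub L by (rule lin_help3)
    next
      case False
      then have "?v < real r / T" using v unfolding Jr_def er_def by auto
      then have Ub: "gf T e th tj ?v \<le> e * ?v + ?C * real r"
        using Gj.gU'[of r ?v] r by simp
      have "real r / T \<le> (real r + th) / T" using th Tp by (intro divide_right_mono) auto
      then have "?v < ?u" using u1 \<open>?v < real r / T\<close> by linarith
      then have "e * ?v < e * ?u" using e by simp
      moreover have "0 \<le> ?C * ti r" using e Tp Gi.t[of r] by simp
      moreover have "?C * (real r + ti r) = ?C * real r + ?C * ti r"
        by (simp add: distrib_left)
      ultimately show ?thesis using Ub L lin_help2[of "gf T e th tj ?v" "e * ?v" "?C * real r" "e * ?u" "?C * ti r" "gf T e th ti ?u"] by simp
    qed
    then show "\<omega> \<in> {\<omega>\<in>space ?M. gf T e th tj (\<omega> j) < gf T e th ti (\<omega> i)}" using sp by simp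
  qed
  have "measure ?M (\<Union>r\<in>{..<T}. E r) = (\<Sum>r<T. measure ?M (E r))"
    using E_sets disj by (intro measure_finite_Union) (auto simp: P.emeasure_eq_measure)
  also have "\<dots> = (\<Sum>r<T. (1 - th) / T * er r)"
    by (rule sum.cong) (auto simp: mE)
  also have "\<dots> = (1 - th) / T * ((real T * (real T - 1) / 2 + (1 - th) * real (card {r\<in>{..<T}. w r})) / T)"
  proof -
    have "(\<Sum>r<T. er r) = ((\<Sum>r<T. real r) + (\<Sum>r<T. if w r then 1 - th else 0)) / T"
      unfolding er_def by (simp add: sum_divide_distrib[symmetric] sum.distrib)
    also have "(\<Sum>r<T. if w r then 1 - th else 0) = (1 - th) * real (card {r\<in>{..<T}. w r})"
      by (simp add: sum.inter_filter[symmetric])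
    finally have S: "(\<Sum>r<T. er r) = ((real T * (real T - 1) / 2) + (1 - th) * real (card {r\<in>{..<T}. w r})) / T"
      by (simp only: sum_real_lessThan)
    have "(\<Sum>r<T. (1 - th) / T * er r) = (1 - th) / T * (\<Sum>r<T. er r)" by (rule sum_distrib_left[symmetric])
    then show ?thesis by (simp only: S)
  qed
  finally have eq: "measure ?M (\<Union>r\<in>{..<T}. E r) = (1 - th) / T * ((real T * (real T - 1) / 2 + (1 - th) * real (card {r\<in>{..<T}. w r})) / T)" .
  have "1/2 < (1 - th) / T * ((real T * (real T - 1) / 2 + (1 - th) * real (card {r\<in>{..<T}. w r})) / T)"
    using Gi.T th win thsmall unfolding w_def by (intro final_ineq) auto
  also have "\<dots> \<le> measure ?M {\<omega>\<in>space ?M. gf T e th tj (\<omega> j) < gf T e th ti (\<omega> i)}"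
    unfolding eq[symmetric]
  proof (rule finite_measure.finite_measure_mono[OF _ sub])
    show "finite_measure ?M" by unfold_locales
    have "gf T e th tj \<in> borel_measurable U" "gf T e th ti \<in> borel_measurable U"
      using Gi.g_meas Gj.g_meas by (auto intro: meas_U)
    then show "{\<omega>\<in>space ?M. gf T e th tj (\<omega> j) < gf T e th ti (\<omega> i)} \<in> sets ?M"
      using ij by measurable
  qed
  finally show ?thesis .
qed


lemma coord_indep:
  fixes I :: "nat set"
  shows "prob_space.indep_vars (PiM I (\<lambda>_. U)) (\<lambda>_. U) (\<lambda>i \<omega>. \<omega> i) I"
proof -
  interpret P: product_prob_space "\<lambda>_. U" I
    by (intro product_prob_spaceI prob_U)
  show ?thesis
  proof (cases "I = {}")
    case True
    show ?thesis
      by (subst P.indep_vars_def, subst P.indep_sets_def) (simp add: True)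
  next
    case False
    show ?thesis
    proof (subst P.indep_vars_iff_distr_eq_PiM'[OF False])
      show "(\<lambda>\<omega>::nat \<Rightarrow> real. \<omega> i) \<in> measurable (PiM I (\<lambda>_. U)) U" if "i \<in> I" for i
        using that by simp
      have "distr (PiM I (\<lambda>_. U)) (PiM I (\<lambda>_. U)) (\<lambda>x. restrict x I) = distr (PiM I (\<lambda>_. U)) (PiM I (\<lambda>_. U)) (\<lambda>x. x)"
        by (rule distr_cong) (auto simp: space_PiM)
      also have "\<dots> = PiM I (\<lambda>_. U)" by (rule distr_id)
      also have "\<dots> = PiM I (\<lambda>i. distr (PiM I (\<lambda>_. U)) U (\<lambda>x. x i))"
        by (rule PiM_cong) (auto simp: distr_PiM_component[of I "\<lambda>_. U", OF prob_U])
      finally show "distr (PiM I (\<lambda>_. U)) (PiM I (\<lambda>_. U)) (\<lambda>x. restrict x I) = PiM I (\<lambda>i. distr (PiM I (\<lambda>_. U)) U (\<lambda>x. x i))" .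
    qed
  qed
qed

lemma main_generic:
  fixes n :: nat and R :: "(nat \<times> nat) set" and T :: nat and e th c :: real and tt :: "nat \<Rightarrow> nat \<Rightarrow> real"
  assumes tour: "tournament {1..n} R"
    and gs: "\<And>v. v \<in> {1..n} \<Longrightarrow> gsetup T e th (tt v)"
    and sums: "\<And>v. v \<in> {1..n} \<Longrightarrow> (\<Sum>r<T. tt v r) = real T / 2"
    and cbig: "e < (1 - e) / real T * c"
    and win: "\<And>i j. (i, j) \<in> R \<Longrightarrow> real T + 1 \<le> 2 * real (card {r\<in>{..<T}. tt j r + c \<le> tt i r})"
    and thsmall: "real T ^ 2 < (1 - 2*th) * (real T ^ 2 + 1)"
  shows "\<exists>(M :: (nat \<Rightarrow> real) measure) (X :: nat \<Rightarrow> (nat \<Rightarrow> real) \<Rightarrow> real).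
           prob_space M \<and>
           prob_space.indep_vars M (\<lambda>_. borel) X {1..n} \<and>
           (\<forall>i\<in>{1..n}. cont_rv_unit M (X i) \<and> proper_rv M (X i)) \<and>
           (\<forall>i\<in>{1..n}. \<forall>j\<in>{1..n}.
              measure M {\<omega> \<in> space M. X i \<omega> > X j \<omega>} > 1 / 2 \<longleftrightarrow> (i, j) \<in> R)"
proof -
  let ?I = "{1..n}"
  let ?M = "PiM ?I (\<lambda>_. U)"
  define X where "X i \<omega> = gf T e th (tt i) (\<omega> i)" for i and \<omega> :: "nat \<Rightarrow> real"
  interpret P: product_prob_space "\<lambda>_. U" ?I
    by (intro product_prob_spaceI prob_U)
  have gmeas: "gf T e th (tt i) \<in> borel_measurable U" if "i \<in> ?I" for i
    using gsetup.g_meas[OF gs[OF that]] by (rule meas_U)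
  have Xmeas: "X i \<in> borel_measurable ?M" if "i \<in> ?I" for i
    unfolding X_def using that gmeas[OF that] by measurable
  have indep: "P.indep_vars (\<lambda>_. borel) X ?I"
    unfolding X_def
    by (rule P.indep_vars_compose2[OF coord_indep]) (rule gmeas)
  have dist: "distr ?M U (\<lambda>\<omega>. \<omega> i) = U" if "i \<in> ?I" for i
    using that by (intro distr_PiM_component prob_U)
  have cont: "cont_rv_unit ?M (X i)" if i: "i \<in> ?I" for i
  proof -
    interpret G: gsetup T e th "tt i" by (rule gs[OF i])
    have "distr_fun ?M (X i) x = G.Fd x" for x
    proof -
      have "{u\<in>space U. G.g u \<le> x} \<in> sets U" using gmeas[OF i] by measurable
      then have "measure (distr ?M U (\<lambda>\<omega>. \<omega> i)) {u\<in>space U. G.g u \<le> x} = measure ?M ((\<lambda>\<omega>. \<omega> i) -` {u\<in>space U. G.g u \<le> x} \<inter> space ?M)"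
        using i by (intro measure_distr) auto
      also have "(\<lambda>\<omega>. \<omega> i) -` {u\<in>space U. G.g u \<le> x} \<inter> space ?M = {\<omega>\<in>space ?M. X i \<omega> \<le> x}"
      proof -
        have "\<omega> i \<in> space U" if "\<omega> \<in> space ?M" for \<omega>
          using measurable_space[OF measurable_component_singleton[OF i] that] .
        then show ?thesis by (auto simp: X_def)
      qed
      finally show ?thesis unfolding distr_fun_def G.Fd_def dist[OF i] by simp
    qed
    then have "distr_fun ?M (X i) = G.Fd" by auto
    then show ?thesis unfolding cont_rv_unit_def
      using Xmeas[OF i] G.Fd_cont G.Fd_strict G.Fd0 G.Fd1 by simp
  qed
  have proper: "proper_rv ?M (X i)" if i: "i \<in> ?I" for i
  proof -
    interpret G: gsetup T e th "tt i" by (rule gs[OF i])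
    have "integral\<^sup>L ?M (X i) = integral\<^sup>L (distr ?M U (\<lambda>\<omega>. \<omega> i)) G.g"
      unfolding X_def using i gmeas[OF i] by (subst integral_distr) auto
    also have "\<dots> = 1/2" unfolding dist[OF i] using G.g_int_U[OF sums[OF i]] .
    finally show ?thesis unfolding proper_rv_def .
  qed
  have pb: "1/2 < measure ?M {\<omega>\<in>space ?M. X j \<omega> < X i \<omega>}" if "(i, j) \<in> R" for i j
  proof -
    have ij: "i \<in> ?I" "j \<in> ?I" "i \<noteq> j" using tour that unfolding tournament_def by auto
    show ?thesis unfolding X_def
      by (rule pair_bound[OF gs[OF ij(1)] gs[OF ij(2)] ij cbig win[OF that] thsmall])
  qed
  have iff: "measure ?M {\<omega> \<in> space ?M. X i \<omega> > X j \<omega>} > 1 / 2 \<longleftrightarrow> (i, j) \<in> R"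
    if ij: "i \<in> ?I" "j \<in> ?I" for i j
  proof
    assume "(i, j) \<in> R" then show "measure ?M {\<omega> \<in> space ?M. X i \<omega> > X j \<omega>} > 1 / 2" using pb by simp
  next
    assume gt: "measure ?M {\<omega> \<in> space ?M. X i \<omega> > X j \<omega>} > 1 / 2"
    show "(i, j) \<in> R"
    proof (rule ccontr)
      assume nR: "(i, j) \<notin> R"
      show False
      proof (cases "i = j")
        case True
        then show False using gt by simp
      next
        case False
        then have "(j, i) \<in> R" using tour nR ij unfolding tournament_def by blast
        then have gt2: "1/2 < measure ?M {\<omega>\<in>space ?M. X i \<omega> < X j \<omega>}" by (rule pb)
        have s1: "{\<omega>\<in>space ?M. X i \<omega> > X j \<omega>} \<in> sets ?M" "{\<omega>\<in>space ?M. X i \<omega> < X j \<omega>} \<in> sets ?M"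
          using Xmeas[OF ij(1)] Xmeas[OF ij(2)] by measurable
        have "measure ?M ({\<omega>\<in>space ?M. X i \<omega> > X j \<omega>} \<union> {\<omega>\<in>space ?M. X i \<omega> < X j \<omega>})
            = measure ?M {\<omega>\<in>space ?M. X i \<omega> > X j \<omega>} + measure ?M {\<omega>\<in>space ?M. X i \<omega> < X j \<omega>}"
          using s1 by (intro P.finite_measure_Union) auto
        moreover have "measure ?M ({\<omega>\<in>space ?M. X i \<omega> > X j \<omega>} \<union> {\<omega>\<in>space ?M. X i \<omega> < X j \<omega>}) \<le> 1"
          by (rule P.prob_le_1)
        ultimately show False using gt gt2 by simp
      qed
    qed
  qed
  show ?thesis
    apply (rule exI[of _ ?M], rule exI[of _ X])
    using P.prob_space_axioms indep cont proper iff by auto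
qed


definition rkab :: "nat \<Rightarrow> (nat \<times> nat) set \<Rightarrow> bool \<Rightarrow> nat \<Rightarrow> nat \<Rightarrow> nat \<Rightarrow> int" where
  "rkab n R s a b v = (if s then (if (a, b) \<in> R \<and> v = a then int n + 2 else if (a, b) \<in> R \<and> v = b then int n + 1 else int v)
     else (if (a, b) \<in> R \<and> v = a then - (int n + 1) else if (a, b) \<in> R \<and> v = b then - (int n + 2) else - int v))"

definition rk :: "nat \<Rightarrow> (nat \<times> nat) set \<Rightarrow> nat \<Rightarrow> nat \<Rightarrow> int" where
  "rk n R r v = rkab n R (even r) (r div 2 div n + 1) (r div 2 mod n + 1) v"

lemma rkab_bound: "v \<le> n \<Longrightarrow> \<bar>rkab n R s a b v\<bar> \<le> int n + 2"
  unfolding rkab_def by auto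

lemma rk_bound: "v \<le> n \<Longrightarrow> \<bar>rk n R r v\<bar> \<le> int n + 2"
  unfolding rk_def by (rule rkab_bound)

lemma rkab_count:
  assumes "i \<in> {1..n}" "j \<in> {1..n}" "i \<noteq> j" "(i, j) \<in> R" "(j, i) \<notin> R"
  shows "(if rkab n R True a b j < rkab n R True a b i then 1 else 0)
       + (if rkab n R False a b j < rkab n R False a b i then 1 else 0) = (if a = i \<and> b = j then 2 else (1::nat))"
  using assms unfolding rkab_def by auto

lemma sum_double:
  fixes N :: nat and f :: "nat \<Rightarrow> 'a::comm_monoid_add"
  shows "(\<Sum>r<2*N. f r) = (\<Sum>p<N. f (2*p) + f (2*p+1))"
  by (induction N) (auto simp: numeral_2_eq_2 add.assoc)

lemma pair_index:
  fixes n i j p :: nat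
  assumes "0 < n" "j \<in> {1..n}" "i \<ge> 1"
  shows "(p div n + 1 = i \<and> p mod n + 1 = j) \<longleftrightarrow> p = (i - 1) * n + (j - 1)"
proof
  assume "p div n + 1 = i \<and> p mod n + 1 = j"
  then show "p = (i - 1) * n + (j - 1)" using div_mult_mod_eq[of p n] by (auto simp: algebra_simps)
next
  assume p: "p = (i - 1) * n + (j - 1)"
  obtain i' j' where ij': "i = Suc i'" "j = Suc j'" using assms by (cases i; cases j) auto
  have k: "j' < n" using assms ij' by auto
  have d: "(j' + i' * n) div n = i'" using k assms by simp
  have m: "(j' + i' * n) mod n = j'" using k assms by simp
  have "p = j' + i' * n" unfolding p ij' by simp
  then show "p div n + 1 = i \<and> p mod n + 1 = j" using d m ij' by auto
qed

lemma win_count: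
  assumes tour: "tournament {1..n} R" and ij: "(i, j) \<in> R"
  shows "n * n + 1 \<le> card {r\<in>{..<2*(n*n)}. rk n R r j < rk n R r i}"
proof -
  have i: "i \<in> {1..n}" and j: "j \<in> {1..n}" and ne: "i \<noteq> j"
    using tour ij unfolding tournament_def by auto
  have ji: "(j, i) \<notin> R"
    using tour ij i j ne unfolding tournament_def by blast
  have n: "0 < n" using i by auto
  let ?f = "\<lambda>r. if rk n R r j < rk n R r i then 1 else (0::nat)"
  have "card {r\<in>{..<2*(n*n)}. rk n R r j < rk n R r i} = (\<Sum>r<2*(n*n). ?f r)"
    by (simp add: sum.inter_filter[symmetric])
  also have "\<dots> = (\<Sum>p<n*n. ?f (2*p) + ?f (2*p+1))" by (rule sum_double)
  also have "\<dots> = (\<Sum>p<n*n. if p div n + 1 = i \<and> p mod n + 1 = j then 2 else 1)"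
  proof (rule sum.cong)
    fix p assume "p \<in> {..<n*n}"
    have "?f (2*p) + ?f (2*p+1) = (if rkab n R True (p div n + 1) (p mod n + 1) j < rkab n R True (p div n + 1) (p mod n + 1) i then 1 else 0)
       + (if rkab n R False (p div n + 1) (p mod n + 1) j < rkab n R False (p div n + 1) (p mod n + 1) i then 1 else 0)"
      unfolding rk_def by simp
    also have "\<dots> = (if p div n + 1 = i \<and> p mod n + 1 = j then 2 else 1)"
      by (rule rkab_count[OF i j ne ij ji])
    finally show "?f (2*p) + ?f (2*p+1) = (if p div n + 1 = i \<and> p mod n + 1 = j then 2 else 1)" .
  qed simp
  also have "\<dots> = (\<Sum>p<n*n. 1 + (if p = (i - 1) * n + (j - 1) then 1 else 0))"
    using pair_index[OF n j] i by (intro sum.cong) auto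
  also have "\<dots> = n * n + 1"
  proof -
    have "(i - 1) * n + (j - 1) < n * n"
    proof -
      have "(i - 1) * n + (j - 1) < (i - 1) * n + n" using j by auto
      also have "\<dots> = i * n" using i by (cases i) auto
      also have "\<dots> \<le> n * n" using i by auto
      finally show ?thesis .
    qed
    then have "(\<Sum>p<n*n. if p = (i - 1) * n + (j - 1) then 1 else (0::nat)) = 1"
      by (simp add: sum.delta)
    moreover have "(\<Sum>p<n*n. 1 + (if p = (i - 1) * n + (j - 1) then 1 else (0::nat)))
      = (\<Sum>p<n*n. 1) + (\<Sum>p<n*n. if p = (i - 1) * n + (j - 1) then 1 else (0::nat))"
      by (rule sum.distrib)
    ultimately show ?thesis by simp
  qed
  finally show ?thesis by simp
qed


definition cc :: "nat \<Rightarrow> real" where "cc n = 1 / (4 * (real n ^ 2 + 1) * (real n + 2))"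

definition tt :: "nat \<Rightarrow> (nat \<times> nat) set \<Rightarrow> nat \<Rightarrow> nat \<Rightarrow> real" where
  "tt n R v r = (if r < 2*(n*n) then 1/2 + cc n * of_int (rk n R r v)
     else 1/2 - cc n * of_int (\<Sum>s<2*(n*n). rk n R s v))"

lemma sqp: "0 < real n ^ 2 + 1"
  using zero_le_power2[of "real n"] by linarith

lemma cc_pos: "0 < cc n"
proof -
  have "0 < 4 * (real n ^ 2 + 1) * (real n + 2)" using sqp[of n] by (intro mult_pos_pos) auto
  then show ?thesis unfolding cc_def by simp
qed

lemma inv_help: fixes A B :: real shows "B \<noteq> 0 \<Longrightarrow> 1 / (A * B) * B = 1 / A"
  by simp

lemma cc_mult: "cc n * (real n + 2) = 1 / (4 * (real n ^ 2 + 1))"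
  unfolding cc_def by (rule inv_help) simp

lemma tt_bounds:
  assumes "v \<le> n"
  shows "0 \<le> tt n R v r" "tt n R v r \<le> 1"
proof -
  have "\<bar>tt n R v r - 1/2\<bar> \<le> 1/2"
  proof (cases "r < 2*(n*n)")
    case True
    have b: "\<bar>real_of_int (rk n R r v)\<bar> \<le> real n + 2"
      using rk_bound[OF assms, of R r] by linarith
    have "\<bar>tt n R v r - 1/2\<bar> = cc n * \<bar>real_of_int (rk n R r v)\<bar>"
      using True cc_pos[of n] by (simp add: tt_def abs_mult)
    also have "\<dots> \<le> cc n * (real n + 2)" using b cc_pos[of n] by (intro mult_left_mono) auto
    also have "\<dots> \<le> 1/2"
    proof -
      have "1 \<le> 1/2 * (4 * (real n ^ 2 + 1))" by simp
      moreover have "0 < 4 * (real n ^ 2 + 1)" using sqp[of n] by simp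
      ultimately show ?thesis unfolding cc_mult by (simp add: pos_divide_le_eq)
    qed
    finally show ?thesis .
  next
    case False
    have "\<bar>(\<Sum>s<2*(n*n). rk n R s v)\<bar> \<le> (\<Sum>s<2*(n*n). \<bar>rk n R s v\<bar>)" by (rule sum_abs)
    also have "\<dots> \<le> (\<Sum>s<2*(n*n). int n + 2)" by (intro sum_mono rk_bound assms)
    also have "\<dots> = int (2*(n*n)) * (int n + 2)" by simp
    finally have "real_of_int \<bar>(\<Sum>s<2*(n*n). rk n R s v)\<bar> \<le> real_of_int (int (2*(n*n)) * (int n + 2))"
      by (simp only: of_int_le_iff)
    then have b: "\<bar>real_of_int (\<Sum>s<2*(n*n). rk n R s v)\<bar> \<le> real (2*(n*n)) * (real n + 2)"
      by simp
    have "\<bar>tt n R v r - 1/2\<bar> = cc n * \<bar>real_of_int (\<Sum>s<2*(n*n). rk n R s v)\<bar>"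
      using False cc_pos[of n] by (simp add: tt_def abs_mult)
    also have "\<dots> \<le> cc n * (real (2*(n*n)) * (real n + 2))" using b cc_pos[of n] by (intro mult_left_mono) auto
    also have "\<dots> = real (2*(n*n)) * (cc n * (real n + 2))" by simp
    also have "\<dots> = real (2*(n*n)) / (4 * (real n ^ 2 + 1))" unfolding cc_mult by simp
    also have "\<dots> \<le> 1/2"
    proof -
      have "real (2*(n*n)) \<le> 1/2 * (4 * (real n ^ 2 + 1))" by (simp add: power2_eq_square)
      moreover have "0 < 4 * (real n ^ 2 + 1)" using sqp[of n] by simp
      ultimately show ?thesis by (simp add: pos_divide_le_eq)
    qed
    finally show ?thesis .
  qed
  then have "tt n R v r - 1/2 \<le> 1/2 \<and> - (tt n R v r - 1/2) \<le> 1/2" by (simp only: abs_le_iff)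
  then show "0 \<le> tt n R v r" "tt n R v r \<le> 1" by linarith+
qed

lemma tt_sum: "(\<Sum>r<2*(n*n)+1. tt n R v r) = real (2*(n*n)+1) / 2"
proof -
  have "(\<Sum>r<2*(n*n). tt n R v r) = (\<Sum>r<2*(n*n). 1/2 + cc n * of_int (rk n R r v))"
    by (rule sum.cong) (auto simp: tt_def)
  also have "\<dots> = real (2*(n*n)) / 2 + cc n * of_int (\<Sum>r<2*(n*n). rk n R r v)"
    by (simp add: sum.distrib sum_distrib_left of_int_sum)
  finally show ?thesis by (simp add: tt_def)
qed

lemma tt_win:
  assumes tour: "tournament {1..n} R" and ij: "(i, j) \<in> R"
  shows "real (2*(n*n)+1) + 1 \<le> 2 * real (card {r\<in>{..<2*(n*n)+1}. tt n R j r + cc n \<le> tt n R i r})"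
proof -
  have "{r\<in>{..<2*(n*n)}. rk n R r j < rk n R r i} \<subseteq> {r\<in>{..<2*(n*n)+1}. tt n R j r + cc n \<le> tt n R i r}"
  proof safe
    fix r assume r: "r < 2*(n*n)" "rk n R r j < rk n R r i"
    then have "real_of_int (rk n R r j) + 1 \<le> real_of_int (rk n R r i)" by linarith
    then have "cc n * (real_of_int (rk n R r j) + 1) \<le> cc n * real_of_int (rk n R r i)"
      using cc_pos[of n] by (intro mult_left_mono) auto
    then show "tt n R j r + cc n \<le> tt n R i r" using r by (simp add: tt_def algebra_simps)
  qed auto
  then have "card {r\<in>{..<2*(n*n)}. rk n R r j < rk n R r i} \<le> card {r\<in>{..<2*(n*n)+1}. tt n R j r + cc n \<le> tt n R i r}"
    by (intro card_mono) auto
  then have "n * n + 1 \<le> card {r\<in>{..<2*(n*n)+1}. tt n R j r + cc n \<le> tt n R i r}"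
    using win_count[OF tour ij] by linarith
  then have "real (n * n + 1) \<le> real (card {r\<in>{..<2*(n*n)+1}. tt n R j r + cc n \<le> tt n R i r})"
    by (simp only: of_nat_le_iff)
  then show ?thesis by simp
qed



theorem theorem1p2:
  fixes n :: nat and R :: "(nat \<times> nat) set"
  assumes "tournament {1..n} R"
  shows "\<exists>(M :: (nat \<Rightarrow> real) measure) (X :: nat \<Rightarrow> (nat \<Rightarrow> real) \<Rightarrow> real).
           prob_space M \<and>
           prob_space.indep_vars M (\<lambda>_. borel) X {1..n} \<and>
           (\<forall>i\<in>{1..n}. cont_rv_unit M (X i) \<and> proper_rv M (X i)) \<and>
           (\<forall>i\<in>{1..n}. \<forall>j\<in>{1..n}.
              measure M {\<omega> \<in> space M. X i \<omega> > X j \<omega>} > 1 / 2 \<longleftrightarrow> (i, j) \<in> R)"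
proof -
  define T where "T = 2*(n*n)+1"
  define e where "e = cc n / (4 * real T)"
  define th where "th = 1 / (4 * (real T ^ 2 + 1))"
  have T1: "T \<ge> 1" unfolding T_def by simp
  then have Tp: "real T \<ge> 1" by simp
  have ccp: "0 < cc n" by (rule cc_pos)
  have cc8: "cc n \<le> 1/8"
  proof -
    have "8 \<le> 4 * (real n ^ 2 + 1) * (real n + 2)"
    proof -
      have "1 \<le> real n ^ 2 + 1" "2 \<le> real n + 2" by auto
      then have "1 * 2 \<le> (real n ^ 2 + 1) * (real n + 2)" by (intro mult_mono) auto
      then have "8 \<le> 4 * ((real n ^ 2 + 1) * (real n + 2))" by linarith
      then show ?thesis by (simp only: mult.assoc)
    qed
    then show ?thesis unfolding cc_def by (intro divide_left_mono) auto
  qed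
  have e0: "0 < e" unfolding e_def using ccp Tp by simp
  have e1: "e \<le> 1/32"
  proof -
    have "e \<le> cc n / 4" unfolding e_def using ccp Tp by (simp add: field_simps)
    then show ?thesis using cc8 by simp
  qed
  have D: "2 < 4 * (real T ^ 2 + 1)"
  proof -
    have "4 * (real T ^ 2 + 1) = 4 * real T ^ 2 + 4" by (simp add: ring_distribs)
    then show ?thesis using zero_le_power2[of "real T"] by linarith
  qed
  have th0: "0 < th" unfolding th_def using D by simp
  have th1: "th < 1/2" unfolding th_def using D by (intro divide_strict_left_mono) auto
  have gs: "gsetup T e th (tt n R v)" if "v \<in> {1..n}" for v
    using T1 e0 e1 th0 th1 tt_bounds[of v n R] that by unfold_locales auto
  have sums: "(\<Sum>r<T. tt n R v r) = real T / 2" for v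
    unfolding T_def by (rule tt_sum)
  have cbig: "e < (1 - e) / real T * cc n"
  proof -
    have "e = cc n / real T * (1/4)" unfolding e_def by simp
    also have "\<dots> < cc n / real T * (1 - e)" using e1 ccp Tp by (intro mult_strict_left_mono) auto
    also have "\<dots> = (1 - e) / real T * cc n" by simp
    finally show ?thesis .
  qed
  have win: "real T + 1 \<le> 2 * real (card {r\<in>{..<T}. tt n R j r + cc n \<le> tt n R i r})" if "(i, j) \<in> R" for i j
    unfolding T_def by (rule tt_win[OF assms that])
  have thsmall: "real T ^ 2 < (1 - 2*th) * (real T ^ 2 + 1)"
  proof -
    have "(1 - 2*th) * (real T ^ 2 + 1) = real T ^ 2 + 1/2"
      unfolding th_def using D by (simp add: field_simps)
    then show ?thesis by simp
  qed
  show ?thesis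
    by (rule main_generic[OF assms gs sums cbig win thsmall])
qed

end
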